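(* Let $L=L(m,n;k,l)$ be an $L$-shaped supergrid graph. Then $L$ contains a Hamiltonian cycle if and only if $L$ has no vertex of degree $1$.
   Context: The infinite supergrid graph has as vertices all points $(x,y)\in\mathbb{Z}^2$, two distinct vertices $u=(u_x,u_y)$, $v=(v_x,v_y)$ being adjacent iff $|u_x-v_x|\le 1$ and $|u_y-v_y|\le 1$. A supergrid graph is a finite vertex-induced subgraph of it. For integers $m,n>1$ and $k,l\ge 1$ with $m-k\ge 1$ and $n-l\ge 1$, the $L$-shaped supergrid graph $L(m,n;k,l)$ is the supergrid graph induced by the vertex set $\{(x,y):1\le x\le m,\ 1\le y\le n\}\setminus\{(x,y): m-k+1\le x\le m,\ 1\le y\le l\}$ (i.e. the rectangle $R(m,n)$ with an $k\times l$ block removed from its upper-right corner, where $(1,1)$ is the upper-left corner and $y$ increases downward). A cycle is a closed simple path on at least $3$ distinct vertices. *)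

theory Defs
  imports Main
begin

type_synonym vertex = "int \<times> int"

definition sg_adj :: "vertex \<Rightarrow> vertex \<Rightarrow> bool" where
  "sg_adj u v \<longleftrightarrow> u \<noteq> v \<and> \<bar>fst u - fst v\<bar> \<le> 1 \<and> \<bar>snd u - snd v\<bar> \<le> 1"

definition Lshape :: "int \<Rightarrow> int \<Rightarrow> int \<Rightarrow> int \<Rightarrow> vertex set" where
  "Lshape m n k l =
     {(x, y). 1 \<le> x \<and> x \<le> m \<and> 1 \<le> y \<and> y \<le> n}
     - {(x, y). m - k + 1 \<le> x \<and> x \<le> m \<and> 1 \<le> y \<and> y \<le> l}"

definition sg_degree :: "vertex set \<Rightarrow> vertex \<Rightarrow> nat" where
  "sg_degree V v = card {u \<in> V. sg_adj u v}"

definition sg_hamiltonian_cycle :: "vertex set \<Rightarrow> vertex list \<Rightarrow> bool" where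
  "sg_hamiltonian_cycle V c \<longleftrightarrow>
     distinct c \<and> set c = V \<and> 3 \<le> length c \<and>
     (\<forall>i. Suc i < length c \<longrightarrow> sg_adj (c ! i) (c ! Suc i)) \<and>
     sg_adj (last c) (hd c)"

end

theory Submission
  imports Defs
begin

lemma sg_adj_sym: "sg_adj u v = sg_adj v u"
  unfolding sg_adj_def by auto

fun chain :: "vertex list \<Rightarrow> bool" where
  "chain [] = True"
| "chain [x] = True"
| "chain (x # y # zs) = (sg_adj x y \<and> chain (y # zs))"

lemma chain_Cons: "chain (x # xs) \<longleftrightarrow> chain xs \<and> (xs \<noteq> [] \<longrightarrow> sg_adj x (hd xs))"
  by (cases xs) auto

lemma chain_append:
  "chain (xs @ ys) \<longleftrightarrow> chain xs \<and> chain ys \<and> (xs \<noteq> [] \<longrightarrow> ys \<noteq> [] \<longrightarrow> sg_adj (last xs) (hd ys))"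
  by (induction xs) (auto simp: chain_Cons)

lemma chain_rev: "chain (rev xs) = chain xs"
  by (induction xs) (auto simp: chain_append chain_Cons last_rev sg_adj_sym)

lemma chain_nth: "chain xs \<Longrightarrow> Suc i < length xs \<Longrightarrow> sg_adj (xs!i) (xs!Suc i)"
proof (induction xs arbitrary: i)
  case Nil then show ?case by simp
next
  case (Cons x xs)
  then show ?case
    by (cases i) (auto simp: chain_Cons hd_conv_nth)
qed

definition hpath :: "vertex set \<Rightarrow> vertex \<Rightarrow> vertex \<Rightarrow> vertex list \<Rightarrow> bool" where
  "hpath S p q xs \<longleftrightarrow> xs \<noteq> [] \<and> distinct xs \<and> set xs = S \<and> chain xs \<and> hd xs = p \<and> last xs = q"

definition HP :: "vertex set \<Rightarrow> vertex \<Rightarrow> vertex \<Rightarrow> bool" where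
  "HP S p q \<longleftrightarrow> (\<exists>xs. hpath S p q xs)"

lemma HP_single: "HP {p} p p"
  unfolding HP_def hpath_def by (rule exI[of _ "[p]"]) auto

lemma HP_append:
  assumes "HP S p q" "HP T r s" "S \<inter> T = {}" "sg_adj q r"
  shows "HP (S \<union> T) p s"
proof -
  obtain xs ys where "hpath S p q xs" "hpath T r s ys" using assms unfolding HP_def by blast
  then have "hpath (S \<union> T) p s (xs @ ys)" using assms(3,4)
    unfolding hpath_def by (auto simp: chain_append)
  then show ?thesis unfolding HP_def by blast
qed

lemma HP_rev: "HP S p q \<Longrightarrow> HP S q p"
  unfolding HP_def hpath_def
  by (metis chain_rev distinct_rev hd_rev last_rev rev_is_Nil_conv set_rev)

lemma HP_eq: "HP S p q \<Longrightarrow> S = T \<Longrightarrow> HP T p q" by simp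

lemma HP_cycle:
  assumes "HP S p q" "sg_adj q p" "a \<in> S" "b \<in> S" "c \<in> S" "a \<noteq> b" "a \<noteq> c" "b \<noteq> c"
  shows "\<exists>cy. sg_hamiltonian_cycle S cy"
proof -
  obtain xs where h: "hpath S p q xs" using assms unfolding HP_def by blast
  have "{a,b,c} \<subseteq> set xs" using h assms unfolding hpath_def by auto
  then have "card {a,b,c} \<le> card (set xs)" by (simp add: card_mono)
  also have "\<dots> = length xs" using h unfolding hpath_def by (metis distinct_card)
  finally have "3 \<le> length xs" using assms by simp
  then have "sg_hamiltonian_cycle S xs" using h assms(2) chain_nth
    unfolding hpath_def sg_hamiltonian_cycle_def by auto
  then show ?thesis by blast
qed

definition rect :: "int \<Rightarrow> int \<Rightarrow> int \<Rightarrow> int \<Rightarrow> vertex set" where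
  "rect x1 x2 y1 y2 = {(x, y). x1 \<le> x \<and> x \<le> x2 \<and> y1 \<le> y \<and> y \<le> y2}"

lemma HP_col: "y1 \<le> y2 \<Longrightarrow> HP (rect x x y1 y2) (x,y1) (x,y2)"
proof (induction "nat (y2 - y1)" arbitrary: y1)
  case 0
  then have "y1 = y2" by simp
  then have "rect x x y1 y2 = {(x,y1)}" by (auto simp: rect_def)
  then show ?case using HP_single \<open>y1 = y2\<close> by simp
next
  case (Suc d)
  then have "HP (rect x x (y1+1) y2) (x,y1+1) (x,y2)" by simp
  then have "HP ({(x,y1)} \<union> rect x x (y1+1) y2) (x,y1) (x,y2)"
    by (intro HP_append[OF HP_single]) (auto simp: rect_def sg_adj_def)
  moreover have "{(x,y1)} \<union> rect x x (y1+1) y2 = rect x x y1 y2" using Suc by (auto simp: rect_def)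
  ultimately show ?case by simp
qed

lemma HP_row: "x1 \<le> x2 \<Longrightarrow> HP (rect x1 x2 y y) (x1,y) (x2,y)"
proof (induction "nat (x2 - x1)" arbitrary: x1)
  case 0
  then have "x1 = x2" by simp
  then have "rect x1 x2 y y = {(x1,y)}" by (auto simp: rect_def)
  then show ?case using HP_single \<open>x1 = x2\<close> by simp
next
  case (Suc d)
  then have "HP (rect (x1+1) x2 y y) (x1+1,y) (x2,y)" by simp
  then have "HP ({(x1,y)} \<union> rect (x1+1) x2 y y) (x1,y) (x2,y)"
    by (intro HP_append[OF HP_single]) (auto simp: rect_def sg_adj_def)
  moreover have "{(x1,y)} \<union> rect (x1+1) x2 y y = rect x1 x2 y y" using Suc by (auto simp: rect_def)
  ultimately show ?case by simp
qed

lemma HP_pair: "sg_adj p q \<Longrightarrow> HP {p,q} p q"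
  using HP_append[OF HP_single HP_single, of p q] by (auto simp: sg_adj_def insert_commute)

lemma HP_zdown: "y1 \<le> y2 \<Longrightarrow> HP (rect x (x+1) y1 y2) (x+1,y1) (x,y2)"
proof (induction "nat (y2 - y1)" arbitrary: y1)
  case 0
  then have "y1 = y2" by simp
  then have "rect x (x+1) y1 y2 = {(x+1,y1),(x,y1)}" by (auto simp: rect_def)
  then show ?case using HP_pair[of "(x+1,y1)" "(x,y1)"] \<open>y1 = y2\<close> by (simp add: sg_adj_def)
next
  case (Suc d)
  then have "HP (rect x (x+1) (y1+1) y2) (x+1,y1+1) (x,y2)" by simp
  then have "HP ({(x+1,y1),(x,y1)} \<union> rect x (x+1) (y1+1) y2) (x+1,y1) (x,y2)"
    by (intro HP_append[OF HP_pair]) (auto simp: rect_def sg_adj_def)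
  moreover have "{(x+1,y1),(x,y1)} \<union> rect x (x+1) (y1+1) y2 = rect x (x+1) y1 y2" using Suc by (auto simp: rect_def)
  ultimately show ?case by simp
qed

lemma HP_zup: "y1 \<le> y2 \<Longrightarrow> HP (rect x (x+1) y1 y2) (x+1,y2) (x,y1)"
proof (induction "nat (y2 - y1)" arbitrary: y2)
  case 0
  then have "y1 = y2" by simp
  then have "rect x (x+1) y1 y2 = {(x+1,y1),(x,y1)}" by (auto simp: rect_def)
  then show ?case using HP_pair[of "(x+1,y1)" "(x,y1)"] \<open>y1 = y2\<close> by (simp add: sg_adj_def)
next
  case (Suc d)
  then have "HP (rect x (x+1) y1 (y2-1)) (x+1,y2-1) (x,y1)" by simp
  then have "HP ({(x+1,y2),(x,y2)} \<union> rect x (x+1) y1 (y2-1)) (x+1,y2) (x,y1)"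
    by (intro HP_append[OF HP_pair]) (auto simp: rect_def sg_adj_def)
  moreover have "{(x+1,y2),(x,y2)} \<union> rect x (x+1) y1 (y2-1) = rect x (x+1) y1 y2" using Suc by (auto simp: rect_def)
  ultimately show ?case by simp
qed

lemma HP_rect_bot: "x1 < x2 \<Longrightarrow> y1 \<le> y2 \<Longrightarrow> HP (rect x1 x2 y1 y2) (x2,y2) (x1,y2)"
proof (induction "nat (x2 - x1)" arbitrary: x2 rule: less_induct)
  case less
  have A: "HP (rect x2 x2 y1 y2) (x2,y2) (x2,y1)" using HP_col[OF less.prems(2)] HP_rev by blast
  consider "x2 = x1+1" | "x2 = x1+2" | "x2 \<ge> x1+3" using less.prems by linarith
  then show ?case
  proof cases
    case 1
    have "HP (rect x2 x2 y1 y2 \<union> rect x1 x1 y1 y2) (x2,y2) (x1,y2)"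
      using 1 by (intro HP_append[OF A HP_col[OF less.prems(2)]]) (auto simp: rect_def sg_adj_def)
    moreover have "rect x2 x2 y1 y2 \<union> rect x1 x1 y1 y2 = rect x1 x2 y1 y2" using 1 by (auto simp: rect_def)
    ultimately show ?thesis by simp
  next
    case 2
    have "HP (rect x2 x2 y1 y2 \<union> rect x1 (x1+1) y1 y2) (x2,y2) (x1,y2)"
      using 2 by (intro HP_append[OF A HP_zdown[OF less.prems(2)]]) (auto simp: rect_def sg_adj_def)
    moreover have "rect x2 x2 y1 y2 \<union> rect x1 (x1+1) y1 y2 = rect x1 x2 y1 y2" using 2 by (auto simp: rect_def)
    ultimately show ?thesis by simp
  next
    case 3
    have IH: "HP (rect x1 (x2-2) y1 y2) (x2-2,y2) (x1,y2)"
      using less.hyps[of "x2-2"] 3 less.prems by simp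
    have B: "HP (rect (x2-1) (x2-1) y1 y2 \<union> rect x1 (x2-2) y1 y2) (x2-1,y1) (x1,y2)"
      by (intro HP_append[OF HP_col[OF less.prems(2)] IH]) (auto simp: rect_def sg_adj_def)
    have "HP (rect x2 x2 y1 y2 \<union> (rect (x2-1) (x2-1) y1 y2 \<union> rect x1 (x2-2) y1 y2)) (x2,y2) (x1,y2)"
      by (intro HP_append[OF A B]) (auto simp: rect_def sg_adj_def)
    moreover have "rect x2 x2 y1 y2 \<union> (rect (x2-1) (x2-1) y1 y2 \<union> rect x1 (x2-2) y1 y2) = rect x1 x2 y1 y2"
      using 3 by (auto simp: rect_def)
    ultimately show ?thesis by simp
  qed
qed

lemma HP_rect_top: "x1 < x2 \<Longrightarrow> y1 \<le> y2 \<Longrightarrow> HP (rect x1 x2 y1 y2) (x2,y1) (x1,y1)"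
proof (induction "nat (x2 - x1)" arbitrary: x2 rule: less_induct)
  case less
  have A: "HP (rect x2 x2 y1 y2) (x2,y1) (x2,y2)" using HP_col[OF less.prems(2)] by blast
  consider "x2 = x1+1" | "x2 = x1+2" | "x2 \<ge> x1+3" using less.prems by linarith
  then show ?case
  proof cases
    case 1
    have "HP (rect x2 x2 y1 y2 \<union> rect x1 x1 y1 y2) (x2,y1) (x1,y1)"
      using 1 by (intro HP_append[OF A HP_rev[OF HP_col[OF less.prems(2)]]]) (auto simp: rect_def sg_adj_def)
    moreover have "rect x2 x2 y1 y2 \<union> rect x1 x1 y1 y2 = rect x1 x2 y1 y2" using 1 by (auto simp: rect_def)
    ultimately show ?thesis by simp
  next
    case 2
    have "HP (rect x2 x2 y1 y2 \<union> rect x1 (x1+1) y1 y2) (x2,y1) (x1,y1)"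
      using 2 by (intro HP_append[OF A HP_zup[OF less.prems(2)]]) (auto simp: rect_def sg_adj_def)
    moreover have "rect x2 x2 y1 y2 \<union> rect x1 (x1+1) y1 y2 = rect x1 x2 y1 y2" using 2 by (auto simp: rect_def)
    ultimately show ?thesis by simp
  next
    case 3
    have IH: "HP (rect x1 (x2-2) y1 y2) (x2-2,y1) (x1,y1)"
      using less.hyps[of "x2-2"] 3 less.prems by simp
    have B: "HP (rect (x2-1) (x2-1) y1 y2 \<union> rect x1 (x2-2) y1 y2) (x2-1,y2) (x1,y1)"
      by (intro HP_append[OF HP_rev[OF HP_col[OF less.prems(2)]] IH]) (auto simp: rect_def sg_adj_def)
    have "HP (rect x2 x2 y1 y2 \<union> (rect (x2-1) (x2-1) y1 y2 \<union> rect x1 (x2-2) y1 y2)) (x2,y1) (x1,y1)"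
      by (intro HP_append[OF A B]) (auto simp: rect_def sg_adj_def)
    moreover have "rect x2 x2 y1 y2 \<union> (rect (x2-1) (x2-1) y1 y2 \<union> rect x1 (x2-2) y1 y2) = rect x1 x2 y1 y2"
      using 3 by (auto simp: rect_def)
    ultimately show ?thesis by simp
  qed
qed

lemma main_cycle:
  fixes m n k l :: int
  assumes "m > 1" "n > 1" "k \<ge> 1" "l \<ge> 1" "m - k \<ge> 2" "n - l \<ge> 1" "n - l \<ge> 2 \<or> k = 1"
  shows "\<exists>c. sg_hamiltonian_cycle (Lshape m n k l) c"
proof (cases "k = 1")
  case True
  have T: "HP (rect 1 (m-1) 1 l) (1,l) (m-1,l)"
    using HP_rev[OF HP_rect_bot[of 1 "m-1" 1 l]] assms True by simp
  have B: "HP (rect 1 m (l+1) n) (m,l+1) (1,l+1)"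
    using HP_rect_top[of 1 m "l+1" n] assms by simp
  have P: "HP (rect 1 (m-1) 1 l \<union> rect 1 m (l+1) n) (1,l) (1,l+1)"
    by (intro HP_append[OF T B]) (auto simp: rect_def sg_adj_def)
  have E: "rect 1 (m-1) 1 l \<union> rect 1 m (l+1) n = Lshape m n k l"
    using assms True by (auto simp: rect_def Lshape_def)
  show ?thesis
    by (rule HP_cycle[OF P[unfolded E], of "(1,l)" "(2,l)" "(1,l+1)"])
      (use assms True in \<open>auto simp: Lshape_def sg_adj_def\<close>)
next
  case False
  then have b2: "n - l \<ge> 2" using assms by simp
  have R: "HP (rect 1 m n n) (1,n) (m,n)" using HP_row[of 1 m n] assms by simp
  have S: "HP (rect (m-k+1) m (l+1) (n-1)) (m,n-1) (m-k+1,n-1)"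
    using HP_rect_bot[of "m-k+1" m "l+1" "n-1"] assms False b2 by simp
  have T: "HP (rect 1 (m-k) 1 (n-1)) (m-k,n-1) (1,n-1)"
    using HP_rect_bot[of 1 "m-k" 1 "n-1"] assms by simp
  have ST: "HP (rect (m-k+1) m (l+1) (n-1) \<union> rect 1 (m-k) 1 (n-1)) (m,n-1) (1,n-1)"
    by (intro HP_append[OF S T]) (auto simp: rect_def sg_adj_def)
  have P: "HP (rect 1 m n n \<union> (rect (m-k+1) m (l+1) (n-1) \<union> rect 1 (m-k) 1 (n-1))) (1,n) (1,n-1)"
    by (intro HP_append[OF R ST]) (auto simp: rect_def sg_adj_def)
  have E: "rect 1 m n n \<union> (rect (m-k+1) m (l+1) (n-1) \<union> rect 1 (m-k) 1 (n-1)) = Lshape m n k l"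
    using assms by (auto simp: rect_def Lshape_def)
  show ?thesis
    by (rule HP_cycle[OF P[unfolded E], of "(1,n)" "(2,n)" "(1,n-1)"])
      (use assms in \<open>auto simp: Lshape_def sg_adj_def\<close>)
qed

lemma cycle_map:
  assumes "sg_hamiltonian_cycle V c" "inj f" "\<And>u v. sg_adj (f u) (f v) = sg_adj u v"
  shows "sg_hamiltonian_cycle (f ` V) (map f c)"
proof -
  have ne: "c \<noteq> []" using assms(1) unfolding sg_hamiltonian_cycle_def by auto
  show ?thesis using assms ne unfolding sg_hamiltonian_cycle_def
    by (auto simp: distinct_map inj_on_subset last_map hd_map intro: inj_on_subset[OF assms(2)])
qed

lemma Lshape_sym:
  "(\<lambda>(x,y). (m+1-y, n+1-x)) ` Lshape n m l k = Lshape m n k l"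
proof
  show "(\<lambda>(x,y). (m+1-y, n+1-x)) ` Lshape n m l k \<subseteq> Lshape m n k l"
    by (auto simp: Lshape_def)
  show "Lshape m n k l \<subseteq> (\<lambda>(x,y). (m+1-y, n+1-x)) ` Lshape n m l k"
  proof
    fix p assume p: "p \<in> Lshape m n k l"
    obtain X Y where XY: "p = (X,Y)" by (cases p)
    have "(n+1-Y, m+1-X) \<in> Lshape n m l k" using p XY by (auto simp: Lshape_def)
    moreover have "p = (\<lambda>(x,y). (m+1-y, n+1-x)) (n+1-Y, m+1-X)" using XY by simp
    ultimately show "p \<in> (\<lambda>(x,y). (m+1-y, n+1-x)) ` Lshape n m l k" by blast
  qed
qed

lemma exists_cycle:
  fixes m n k l :: int
  assumes "m > 1" "n > 1" "k \<ge> 1" "l \<ge> 1" "m - k \<ge> 1" "n - l \<ge> 1"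
    "m - k \<ge> 2 \<or> l = 1" "n - l \<ge> 2 \<or> k = 1"
  shows "\<exists>c. sg_hamiltonian_cycle (Lshape m n k l) c"
proof (cases "m - k \<ge> 2")
  case True
  then show ?thesis using main_cycle assms by blast
next
  case False
  then have a1: "m - k = 1" "l = 1" using assms by auto
  show ?thesis
  proof (cases "n - l \<ge> 2")
    case True
    obtain c where c: "sg_hamiltonian_cycle (Lshape n m l k) c"
      using main_cycle[of n m l k] assms a1 True by auto
    let ?f = "\<lambda>(x::int,y::int). (m+1-y, n+1-x)"
    have "inj ?f" by (auto simp: inj_def)
    moreover have "\<And>u v. sg_adj (?f u) (?f v) = sg_adj u v"
      by (auto simp: sg_adj_def split: prod.splits)
    ultimately have "sg_hamiltonian_cycle (?f ` Lshape n m l k) (map ?f c)"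
      using cycle_map[OF c] by blast
    then show ?thesis unfolding Lshape_sym by blast
  next
    case False
    then have "k = 1" "n = 2" "m = 2" using assms a1 by auto
    have P: "HP ({(1,1)} \<union> {(1,2),(2,2)}) (1,1) (2,2)"
      by (intro HP_append[OF HP_single HP_pair]) (auto simp: sg_adj_def)
    have E: "{(1,1)} \<union> {(1,2),(2,2)} = Lshape m n k l"
      using \<open>k = 1\<close> \<open>n = 2\<close> \<open>m = 2\<close> a1 by (auto simp: Lshape_def)
    show ?thesis
      by (rule HP_cycle[OF P[unfolded E], of "(1,1)" "(1,2)" "(2,2)"])
        (use \<open>k = 1\<close> \<open>n = 2\<close> \<open>m = 2\<close> a1 in \<open>auto simp: Lshape_def sg_adj_def\<close>)
  qed
qed

lemma cycle_deg2:
  assumes c: "sg_hamiltonian_cycle V c" and v: "v \<in> V"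
  shows "2 \<le> sg_degree V v"
proof -
  define N where "N = length c"
  have N3: "3 \<le> N" and dc: "distinct c" and sc: "set c = V"
    and adj: "\<And>i. Suc i < N \<Longrightarrow> sg_adj (c!i) (c!Suc i)" and la: "sg_adj (last c) (hd c)"
    using c unfolding sg_hamiltonian_cycle_def N_def by auto
  have ne: "c \<noteq> []" using N3 N_def by auto
  have lst: "last c = c!(N-1)" and hdc: "hd c = c!0" using ne N_def by (auto simp: last_conv_nth hd_conv_nth)
  obtain i where i: "i < N" "c!i = v" using v sc N_def by (metis in_set_conv_nth)
  define p where "p = (if i = 0 then N-1 else i-1)"
  define s where "s = (if i = N-1 then 0 else i+1)"
  have p1: "sg_adj (c!p) v"
  proof (cases "i = 0")
    case True then have "c!p = c!(N-1)" "v = c!0" using i p_def by auto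
    then show ?thesis using la lst hdc by simp
  next
    case False then have "Suc (i-1) < N" "p = i-1" "Suc (i-1) = i" using i p_def by auto
    then show ?thesis using adj[of "i-1"] i by metis
  qed
  have s1: "sg_adj (c!s) v"
  proof (cases "i = N-1")
    case True then have "c!s = c!0" "v = c!(N-1)" using i s_def by auto
    then show ?thesis using la lst hdc by (metis sg_adj_sym)
  next
    case False then have "Suc i < N" "s = Suc i" using i s_def by auto
    then show ?thesis using adj[of i] i by (metis sg_adj_sym)
  qed
  have "p < N" "s < N" "p \<noteq> s" using N3 i unfolding p_def s_def by auto
  then have ne2: "c!p \<noteq> c!s" using dc N_def by (simp add: nth_eq_iff_index_eq)
  have sub: "{c!p, c!s} \<subseteq> {u \<in> V. sg_adj u v}" using p1 s1 \<open>p < N\<close> \<open>s < N\<close> sc N_def by auto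
  have fin: "finite {u \<in> V. sg_adj u v}" proof -
    have "finite V" using sc by (metis List.finite_set)
    then show ?thesis by simp
  qed
  have "card {c!p, c!s} \<le> card {u \<in> V. sg_adj u v}" using card_mono[OF fin sub] .
  moreover have "card {c!p, c!s} = 2" using ne2 by simp
  ultimately show ?thesis unfolding sg_degree_def by simp
qed
theorem theorem2:
  fixes m n k l :: int
  assumes "m > 1" and "n > 1" and "k \<ge> 1" and "l \<ge> 1"
    and "m - k \<ge> 1" and "n - l \<ge> 1"
  shows "(\<exists>c. sg_hamiltonian_cycle (Lshape m n k l) c) \<longleftrightarrow>
         (\<forall>v \<in> Lshape m n k l. sg_degree (Lshape m n k l) v \<noteq> 1)"
proof
  assume "\<exists>c. sg_hamiltonian_cycle (Lshape m n k l) c"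
  then obtain c where c: "sg_hamiltonian_cycle (Lshape m n k l) c" by blast
  show "\<forall>v \<in> Lshape m n k l. sg_degree (Lshape m n k l) v \<noteq> 1"
    using cycle_deg2[OF c] by fastforce
next
  assume H: "\<forall>v \<in> Lshape m n k l. sg_degree (Lshape m n k l) v \<noteq> 1"
  have C1: "m - k \<ge> 2 \<or> l = 1"
  proof (rule ccontr)
    assume "\<not> ?thesis"
    then have a: "m - k = 1" "l \<ge> 2" using assms by auto
    have "\<And>x y. ((x,y) \<in> Lshape m n k l \<and> sg_adj (x,y) (1,1)) \<longleftrightarrow> (x,y) = (1,2)"
      using a assms unfolding Lshape_def sg_adj_def by (simp add: abs_le_iff) arith
    then have "{u \<in> Lshape m n k l. sg_adj u (1,1)} = {(1,2)}" by auto
    moreover have "(1,1) \<in> Lshape m n k l" using a assms by (auto simp: Lshape_def)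
    ultimately show False using H unfolding sg_degree_def by fastforce
  qed
  have C2: "n - l \<ge> 2 \<or> k = 1"
  proof (rule ccontr)
    assume "\<not> ?thesis"
    then have a: "n - l = 1" "k \<ge> 2" using assms by auto
    have "\<And>x y. ((x,y) \<in> Lshape m n k l \<and> sg_adj (x,y) (m,n)) \<longleftrightarrow> (x,y) = (m-1,n)"
      using a assms unfolding Lshape_def sg_adj_def by (simp add: abs_le_iff) arith
    then have "{u \<in> Lshape m n k l. sg_adj u (m,n)} = {(m-1,n)}" by auto
    moreover have "(m,n) \<in> Lshape m n k l" using a assms by (auto simp: Lshape_def)
    ultimately show False using H unfolding sg_degree_def by fastforce
  qed
  show "\<exists>c. sg_hamiltonian_cycle (Lshape m n k l) c"
    using exists_cycle[OF assms C1 C2] .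
qed

end
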